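(* Let $n\ge 1$ and let $\theta_1,\theta_2,\theta_3,\kappa_0,\kappa_1,\ldots,\kappa_n,\rho_1,\ldots,\rho_n$ be complex parameters. Let $q_j,p_j,q'_j,p'_j$ ($j=1,\ldots,n$) be (locally holomorphic) functions of $(t_1,t_2)$ solving the Schlesinger–Tsuda system $\mathcal{H}_{n+1,2}$ \[ \frac{\partial q_j}{\partial t_i}=\frac{\partial H_i}{\partial p_j},\quad \frac{\partial p_j}{\partial t_i}=-\frac{\partial H_i}{\partial q_j},\quad \frac{\partial q'_j}{\partial t_i}=\frac{\partial H_i}{\partial p'_j},\quad \frac{\partial p'_j}{\partial t_i}=-\frac{\partial H_i}{\partial q'_j}\qquad(i=1,2;\ j=1,\ldots,n), \] with Hamiltonians $H_1,H_2$ as described in the context. Assume moreover that \[ q_ip_i-\kappa_i-\rho_i=0,\qquad p'_i=0\qquad(i=1,\ldots,n),\qquad \theta_1+\sum_{j=1}^n(\kappa_j+\rho_j)=0 . \] Let $w_0$ be a nonzero function satisfying \[ d\log w_0=\Big(\sum_{j=1}^np_j+\theta_3\Big)d\log(t_1-1)+\Big\{\sum_{j=1}^n(q'_j-1)p_j+\kappa_0+\rho_1\Big\}d\log t_1+\Big(-\sum_{j=1}^nq'_jp_j+\theta_2\Big)d\log(t_1-t_2), \] where $d$ is the exterior derivative in $(t_1,t_2)$, and put $w_i=p_iw_0$, $w'_i=-q'_ip_iw_0$ ($i=1,\ldots,n$). Then the vector $\mathbf{w}={}^t[w_0,w_1,\ldots,w_n,w'_1,\ldots,w'_n]$ satisfies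 the linear Pfaff system \[ d\mathbf{w}=\{A_1^{(1)}d\log(t_1-1)+A_0^{(1)}d\log t_1+A_td\log(t_1-t_2)+A_1^{(2)}d\log(t_2-1)+A_0^{(2)}d\log t_2\}\mathbf{w}, \] where, indexing rows and columns by $0,1,\ldots,2n$ (index $i\in\{1,\dots,n\}$ corresponding to $w_i$ and index $n+i$ to $w'_i$) and letting $E_{i,j}$ denote the $(2n+1)\times(2n+1)$ matrix with $1$ in entry $(i,j)$ and $0$ elsewhere, \begin{align*} A_1^{(1)}&=\theta_3E_{0,0}+\sum_{j=1}^nE_{0,j}+\sum_{i=1}^n\Big\{\theta_3(\kappa_i+\rho_i)E_{i,0}+\sum_{j=1}^n(\kappa_i+\rho_i)E_{i,j}\Big\},\\ A_0^{(1)}&=(\kappa_0+\rho_1)E_{0,0}-\sum_{j=1}^nE_{0,j}-\sum_{j=1}^nE_{0,n+j}+\sum_{i=1}^n\Big\{(\rho_1-\rho_i)E_{i,i}-\sum_{j=i+1}^n(\kappa_i+\rho_i)E_{i,j}\Big\}\\ &\quad+\sum_{i=1}^n\Big\{(\rho_1-\rho_i)E_{n+i,n+i}-\sum_{j=i+1}^n(\kappa_i+\rho_i)E_{n+i,n+j}\Big\},\\ A_t&=\theta_2E_{0,0}+\sum_{j=1}^nE_{0,n+j}+\sum_{i=1}^n\Big\{\theta_2(\kappa_i+\rho_i)E_{n+i,0}+\sum_{j=1}^n(\kappa_i+\rho_i)E_{n+i,n+j}\Big\},\\ A_1^{(2)}&=\sum_{i=1}^n\{\theta_2E_{i,i}-\theta_3E_{i,n+i}\}+\sum_{i=1}^n\{-\theta_2E_{n+i,i}+\theta_3E_{n+i,n+i}\},\\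 A_0^{(2)}&=\sum_{i=1}^n\Big\{-\theta_2(\kappa_i+\rho_i)E_{n+i,0}+\theta_2E_{n+i,i}-\sum_{j=1}^{i-1}(\kappa_i+\rho_i)E_{n+i,n+j}+(\theta_2+\kappa_0-\kappa_i)E_{n+i,n+i}\Big\}. \end{align*}
   Context: The Hamiltonian $H_1$ is \[ H_1=\frac{H_1^{(t)}}{t_1-t_2}+\frac{H_1^{(1)}}{t_1-1}+\frac{H_1^{(0)}}{t_1}, \] where \begin{align*} H_1^{(t)}&=\Big\{\sum_{i=1}^nq_i(p_i-p'_i)+\theta_1\Big\}\Big\{\sum_{i=1}^nq'_i(p'_i-p_i)+\theta_2\Big\},\\ H_1^{(1)}&=\Big[\sum_{i=1}^n\{(q_i-1)p_i+q'_ip'_i-\kappa_i-\rho_i\}-\theta_3\Big]\Big[\sum_{i=1}^nq_i\{(q_i-1)p_i+q'_ip'_i-\kappa_i-\rho_i\}-\theta_1\Big],\\ H_1^{(0)}&=\Big(\sum_{i=1}^nq_ip_i+\theta_1\Big)\Big\{\sum_{i=1}^n(q_i+q'_i-1)p_i+\kappa_0\Big\}-\sum_{i=1}^n\kappa_iq_ip_i\\ &\quad+\sum_{i=1}^n\sum_{j=i+1}^nq_ip_j\{(q_i-q_j)p_i+(q'_i-q'_j)p'_i-\kappa_i-\rho_i\}. \end{align*} The Hamiltonian $H_2$ is obtained from $H_1$ by the simultaneous replacement $t_1\leftrightarrow t_2$, $p_i\leftrightarrow p'_i$, $q_i\leftrightarrow q'_i$ ($i=1,\dots,n$), $\theta_1\leftrightarrow\theta_2$.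 *)

theory Defs
  imports "HOL-Analysis.Analysis"
begin

text \<open>Dependent variables are functions nat => complex indexed by 1..n:
  q, p, q' (written qq), p' (written pp).\<close>

definition H1t :: "nat \<Rightarrow> complex \<Rightarrow> complex \<Rightarrow> (nat \<Rightarrow> complex) \<Rightarrow> (nat \<Rightarrow> complex)
    \<Rightarrow> (nat \<Rightarrow> complex) \<Rightarrow> (nat \<Rightarrow> complex) \<Rightarrow> complex" where
  "H1t n th1 th2 q p qq pp =
     ((\<Sum>i=1..n. q i * (p i - pp i)) + th1) * ((\<Sum>i=1..n. qq i * (pp i - p i)) + th2)"

definition H11 :: "nat \<Rightarrow> complex \<Rightarrow> complex \<Rightarrow> (nat \<Rightarrow> complex) \<Rightarrow> (nat \<Rightarrow> complex)
    \<Rightarrow> (nat \<Rightarrow> complex) \<Rightarrow> (nat \<Rightarrow> complex) \<Rightarrow> (nat \<Rightarrow> complex) \<Rightarrow> (nat \<Rightarrow> complex) \<Rightarrow> complex" where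
  "H11 n th1 th3 ka rh q p qq pp =
     ((\<Sum>i=1..n. (q i - 1) * p i + qq i * pp i - ka i - rh i) - th3) *
     ((\<Sum>i=1..n. q i * ((q i - 1) * p i + qq i * pp i - ka i - rh i)) - th1)"

definition H10 :: "nat \<Rightarrow> complex \<Rightarrow> (nat \<Rightarrow> complex) \<Rightarrow> (nat \<Rightarrow> complex)
    \<Rightarrow> (nat \<Rightarrow> complex) \<Rightarrow> (nat \<Rightarrow> complex) \<Rightarrow> (nat \<Rightarrow> complex) \<Rightarrow> (nat \<Rightarrow> complex) \<Rightarrow> complex" where
  "H10 n th1 ka rh q p qq pp =
     ((\<Sum>i=1..n. q i * p i) + th1) * ((\<Sum>i=1..n. (q i + qq i - 1) * p i) + ka 0)
     - (\<Sum>i=1..n. ka i * q i * p i)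
     + (\<Sum>i=1..n. \<Sum>j=i+1..n. q i * p j *
          ((q i - q j) * p i + (qq i - qq j) * pp i - ka i - rh i))"

definition H1 :: "nat \<Rightarrow> complex \<Rightarrow> complex \<Rightarrow> complex \<Rightarrow> (nat \<Rightarrow> complex) \<Rightarrow> (nat \<Rightarrow> complex)
    \<Rightarrow> complex \<Rightarrow> complex
    \<Rightarrow> (nat \<Rightarrow> complex) \<Rightarrow> (nat \<Rightarrow> complex) \<Rightarrow> (nat \<Rightarrow> complex) \<Rightarrow> (nat \<Rightarrow> complex) \<Rightarrow> complex" where
  "H1 n th1 th2 th3 ka rh t1 t2 q p qq pp =
     H1t n th1 th2 q p qq pp / (t1 - t2)
     + H11 n th1 th3 ka rh q p qq pp / (t1 - 1)
     + H10 n th1 ka rh q p qq pp / t1"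

definition H2 :: "nat \<Rightarrow> complex \<Rightarrow> complex \<Rightarrow> complex \<Rightarrow> (nat \<Rightarrow> complex) \<Rightarrow> (nat \<Rightarrow> complex)
    \<Rightarrow> complex \<Rightarrow> complex
    \<Rightarrow> (nat \<Rightarrow> complex) \<Rightarrow> (nat \<Rightarrow> complex) \<Rightarrow> (nat \<Rightarrow> complex) \<Rightarrow> (nat \<Rightarrow> complex) \<Rightarrow> complex" where
  "H2 n th1 th2 th3 ka rh t1 t2 q p qq pp = H1 n th2 th1 th3 ka rh t2 t1 qq pp q p"

definition Ham :: "nat \<Rightarrow> nat \<Rightarrow> complex \<Rightarrow> complex \<Rightarrow> complex \<Rightarrow> (nat \<Rightarrow> complex) \<Rightarrow> (nat \<Rightarrow> complex)
    \<Rightarrow> complex \<Rightarrow> complex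
    \<Rightarrow> (nat \<Rightarrow> complex) \<Rightarrow> (nat \<Rightarrow> complex) \<Rightarrow> (nat \<Rightarrow> complex) \<Rightarrow> (nat \<Rightarrow> complex) \<Rightarrow> complex" where
  "Ham i = (if i = 1 then H1 else H2)"

type_synonym ham = "(nat \<Rightarrow> complex) \<Rightarrow> (nat \<Rightarrow> complex) \<Rightarrow> (nat \<Rightarrow> complex) \<Rightarrow> (nat \<Rightarrow> complex) \<Rightarrow> complex"

definition dH_dq :: "ham \<Rightarrow> nat \<Rightarrow> (nat \<Rightarrow> complex) \<Rightarrow> (nat \<Rightarrow> complex) \<Rightarrow> (nat \<Rightarrow> complex) \<Rightarrow> (nat \<Rightarrow> complex) \<Rightarrow> complex" where
  "dH_dq H j q p qq pp = deriv (\<lambda>x. H (q(j := x)) p qq pp) (q j)"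
definition dH_dp :: "ham \<Rightarrow> nat \<Rightarrow> (nat \<Rightarrow> complex) \<Rightarrow> (nat \<Rightarrow> complex) \<Rightarrow> (nat \<Rightarrow> complex) \<Rightarrow> (nat \<Rightarrow> complex) \<Rightarrow> complex" where
  "dH_dp H j q p qq pp = deriv (\<lambda>x. H q (p(j := x)) qq pp) (p j)"
definition dH_dqq :: "ham \<Rightarrow> nat \<Rightarrow> (nat \<Rightarrow> complex) \<Rightarrow> (nat \<Rightarrow> complex) \<Rightarrow> (nat \<Rightarrow> complex) \<Rightarrow> (nat \<Rightarrow> complex) \<Rightarrow> complex" where
  "dH_dqq H j q p qq pp = deriv (\<lambda>x. H q p (qq(j := x)) pp) (qq j)"
definition dH_dpp :: "ham \<Rightarrow> nat \<Rightarrow> (nat \<Rightarrow> complex) \<Rightarrow> (nat \<Rightarrow> complex) \<Rightarrow> (nat \<Rightarrow> complex) \<Rightarrow> (nat \<Rightarrow> complex) \<Rightarrow> complex" where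
  "dH_dpp H j q p qq pp = deriv (\<lambda>x. H q p qq (pp(j := x))) (pp j)"

definition has_pderiv :: "(complex \<times> complex \<Rightarrow> complex) \<Rightarrow> nat \<Rightarrow> complex \<Rightarrow> complex \<times> complex \<Rightarrow> bool" where
  "has_pderiv f i D z =
     (if i = 1 then ((\<lambda>s. f (s, snd z)) has_field_derivative D) (at (fst z))
      else ((\<lambda>s. f (fst z, s)) has_field_derivative D) (at (snd z)))"

definition E :: "nat \<Rightarrow> nat \<Rightarrow> nat \<Rightarrow> nat \<Rightarrow> complex" where
  "E i j a b = (if a = i \<and> b = j then 1 else 0)"

definition A11 :: "nat \<Rightarrow> complex \<Rightarrow> (nat \<Rightarrow> complex) \<Rightarrow> (nat \<Rightarrow> complex) \<Rightarrow> nat \<Rightarrow> nat \<Rightarrow> complex" where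
  "A11 n th3 ka rh = (\<lambda>a b. th3 * E 0 0 a b + (\<Sum>j=1..n. E 0 j a b)
     + (\<Sum>i=1..n. th3 * (ka i + rh i) * E i 0 a b + (\<Sum>j=1..n. (ka i + rh i) * E i j a b)))"

definition A01 :: "nat \<Rightarrow> (nat \<Rightarrow> complex) \<Rightarrow> (nat \<Rightarrow> complex) \<Rightarrow> nat \<Rightarrow> nat \<Rightarrow> complex" where
  "A01 n ka rh = (\<lambda>a b. (ka 0 + rh 1) * E 0 0 a b - (\<Sum>j=1..n. E 0 j a b) - (\<Sum>j=1..n. E 0 (n+j) a b)
     + (\<Sum>i=1..n. (rh 1 - rh i) * E i i a b - (\<Sum>j=i+1..n. (ka i + rh i) * E i j a b))
     + (\<Sum>i=1..n. (rh 1 - rh i) * E (n+i) (n+i) a b - (\<Sum>j=i+1..n. (ka i + rh i) * E (n+i) (n+j) a b)))"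

definition At :: "nat \<Rightarrow> complex \<Rightarrow> (nat \<Rightarrow> complex) \<Rightarrow> (nat \<Rightarrow> complex) \<Rightarrow> nat \<Rightarrow> nat \<Rightarrow> complex" where
  "At n th2 ka rh = (\<lambda>a b. th2 * E 0 0 a b + (\<Sum>j=1..n. E 0 (n+j) a b)
     + (\<Sum>i=1..n. th2 * (ka i + rh i) * E (n+i) 0 a b + (\<Sum>j=1..n. (ka i + rh i) * E (n+i) (n+j) a b)))"

definition A12 :: "nat \<Rightarrow> complex \<Rightarrow> complex \<Rightarrow> nat \<Rightarrow> nat \<Rightarrow> complex" where
  "A12 n th2 th3 = (\<lambda>a b. (\<Sum>i=1..n. th2 * E i i a b - th3 * E i (n+i) a b)
     + (\<Sum>i=1..n. - th2 * E (n+i) i a b + th3 * E (n+i) (n+i) a b))"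

definition A02 :: "nat \<Rightarrow> complex \<Rightarrow> (nat \<Rightarrow> complex) \<Rightarrow> (nat \<Rightarrow> complex) \<Rightarrow> nat \<Rightarrow> nat \<Rightarrow> complex" where
  "A02 n th2 ka rh = (\<lambda>a b. (\<Sum>i=1..n. - th2 * (ka i + rh i) * E (n+i) 0 a b + th2 * E (n+i) i a b
     - (\<Sum>j=1..i-1. (ka i + rh i) * E (n+i) (n+j) a b) + (th2 + ka 0 - ka i) * E (n+i) (n+i) a b))"

end

theory Submission
  imports Defs
begin



lemma upd_deriv: "((\<lambda>x. (f(j:=x)) i) has_field_derivative (if i = j then 1 else 0)) (at y within S)"
  by (cases "i = j") (auto intro!: derivative_eq_intros)

lemma ifm: "(if b then 1 else 0) * (a::complex) = (if b then a else 0)"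
  "a * (if b then 1 else 0) = (if b then a else 0)"
  "(if b then x else 0) * a = (if b then x * a else 0)"
  "a * (if b then x else 0) = (if b then a * x else 0)"
  "- (if b then x else 0) = (if b then - x else 0)"
 by auto
lemma sum_if_const: "(\<Sum>k\<in>A. if c then f k else 0) = (if c then sum f A else 0)" by auto

lemma sum_lt: "j \<le> n \<Longrightarrow> (\<Sum>i=Suc 0..n. if Suc i \<le> j then f i else 0) = (\<Sum>i=1..j-1. (f i::complex))"
  apply (rule sum.mono_neutral_cong_right) by auto

lemma d_H1t_q: "j \<in> {1..n} \<Longrightarrow> ((\<lambda>x. H1t n th1 th2 (Q(j:=x)) P QQ PP) has_field_derivative
  (P j - PP j) * ((\<Sum>i=1..n. QQ i * (PP i - P i)) + th2)) (at (Q j))"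
  unfolding H1t_def apply (rule derivative_eq_intros upd_deriv refl | assumption)+
  apply (simp only: fun_upd_triv mult_zero_left mult_zero_right add_0_right add_0_left diff_0_right diff_0 ring_distribs ifm)
  apply (simp add: sum.distrib sum_subtractf sum_if_const sum_lt cong: if_cong)
  apply (simp add: algebra_simps sum.distrib sum_subtractf sum_negf sum_distrib_left)?
  done

lemma d_H11_q: "j \<in> {1..n} \<Longrightarrow> ((\<lambda>x. H11 n th1 th3 ka rh (Q(j:=x)) P QQ PP) has_field_derivative
  P j * ((\<Sum>i=1..n. Q i * ((Q i - 1) * P i + QQ i * PP i - ka i - rh i)) - th1)
  + ((\<Sum>i=1..n. (Q i - 1) * P i + QQ i * PP i - ka i - rh i) - th3) *
     ((Q j - 1) * P j + QQ j * PP j - ka j - rh j + Q j * P j)) (at (Q j))"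
  unfolding H11_def apply (rule derivative_eq_intros upd_deriv refl | assumption)+
  apply (simp only: fun_upd_triv mult_zero_left mult_zero_right add_0_right add_0_left diff_0_right diff_0 ring_distribs ifm)
  apply (simp add: sum.distrib sum_subtractf sum_if_const sum_lt cong: if_cong)
  apply (simp add: algebra_simps sum.distrib sum_subtractf sum_negf sum_distrib_left)?
  done

lemma d_H10_q: "j \<in> {1..n} \<Longrightarrow> ((\<lambda>x. H10 n th1 ka rh (Q(j:=x)) P QQ PP) has_field_derivative 
  P j * ((\<Sum>i=1..n. (Q i + QQ i - 1) * P i) + ka 0) + P j * ((\<Sum>i=1..n. Q i * P i) + th1) - ka j * P j
  + (\<Sum>k=j+1..n. P k * ((Q j - Q k) * P j + (QQ j - QQ k) * PP j - ka j - rh j) + Q j * P k * P j)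
  - (\<Sum>i=1..j-1. Q i * P i * P j)) (at (Q j))"
  unfolding H10_def apply (rule derivative_eq_intros upd_deriv refl | assumption)+
  apply (simp only: fun_upd_triv mult_zero_left mult_zero_right add_0_right add_0_left diff_0_right diff_0 ring_distribs ifm)
  apply (simp add: sum.distrib sum_subtractf sum_if_const sum_lt cong: if_cong)
  apply (simp add: algebra_simps sum.distrib sum_subtractf sum_negf sum_distrib_left)?
  done

lemma d_H1t_p: "j \<in> {1..n} \<Longrightarrow> ((\<lambda>x. H1t n th1 th2 Q (P(j:=x)) QQ PP) has_field_derivative
  Q j * ((\<Sum>i=1..n. QQ i * (PP i - P i)) + th2) - QQ j * ((\<Sum>i=1..n. Q i * (P i - PP i)) + th1)) (at (P j))"
  unfolding H1t_def apply (rule derivative_eq_intros upd_deriv refl | assumption)+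
  apply (simp only: fun_upd_triv mult_zero_left mult_zero_right add_0_right add_0_left diff_0_right diff_0 ring_distribs ifm)
  apply (simp add: sum.distrib sum_subtractf sum_if_const sum_lt cong: if_cong)
  apply (simp add: algebra_simps sum.distrib sum_subtractf sum_negf sum_distrib_left)?
  done

lemma d_H11_p: "j \<in> {1..n} \<Longrightarrow> ((\<lambda>x. H11 n th1 th3 ka rh Q (P(j:=x)) QQ PP) has_field_derivative
  (Q j - 1) * ((\<Sum>i=1..n. Q i * ((Q i - 1) * P i + QQ i * PP i - ka i - rh i)) - th1)
  + ((\<Sum>i=1..n. (Q i - 1) * P i + QQ i * PP i - ka i - rh i) - th3) * (Q j * (Q j - 1))) (at (P j))"
  unfolding H11_def apply (rule derivative_eq_intros upd_deriv refl | assumption)+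
  apply (simp only: fun_upd_triv mult_zero_left mult_zero_right add_0_right add_0_left diff_0_right diff_0 ring_distribs ifm)
  apply (simp add: sum.distrib sum_subtractf sum_if_const sum_lt cong: if_cong)
  apply (simp add: algebra_simps sum.distrib sum_subtractf sum_negf sum_distrib_left)?
  done

lemma d_H10_p: "j \<in> {1..n} \<Longrightarrow> ((\<lambda>x. H10 n th1 ka rh Q (P(j:=x)) QQ PP) has_field_derivative 
  Q j * ((\<Sum>i=1..n. (Q i + QQ i - 1) * P i) + ka 0) + (Q j + QQ j - 1) * ((\<Sum>i=1..n. Q i * P i) + th1) - ka j * Q j
  + (\<Sum>i=1..j-1. Q i * ((Q i - Q j) * P i + (QQ i - QQ j) * PP i - ka i - rh i))
  + (\<Sum>k=j+1..n. Q j * P k * (Q j - Q k))) (at (P j))"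
  unfolding H10_def apply (rule derivative_eq_intros upd_deriv refl | assumption)+
  apply (simp only: fun_upd_triv mult_zero_left mult_zero_right add_0_right add_0_left diff_0_right diff_0 ring_distribs ifm)
  apply (simp add: sum.distrib sum_subtractf sum_if_const sum_lt cong: if_cong)
  apply (simp add: algebra_simps sum.distrib sum_subtractf sum_negf sum_distrib_left)?
  done

lemma d_H1t_qq: "j \<in> {1..n} \<Longrightarrow> ((\<lambda>x. H1t n th1 th2 Q P (QQ(j:=x)) PP) has_field_derivative
  ((\<Sum>i=1..n. Q i * (P i - PP i)) + th1) * (PP j - P j)) (at (QQ j))"
  unfolding H1t_def apply (rule derivative_eq_intros upd_deriv refl | assumption)+
  apply (simp only: fun_upd_triv mult_zero_left mult_zero_right add_0_right add_0_left diff_0_right diff_0 ring_distribs ifm)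
  apply (simp add: sum.distrib sum_subtractf sum_if_const sum_lt cong: if_cong)
  apply (simp add: algebra_simps sum.distrib sum_subtractf sum_negf sum_distrib_left)?
  done

lemma d_H11_qq: "j \<in> {1..n} \<Longrightarrow> ((\<lambda>x. H11 n th1 th3 ka rh Q P (QQ(j:=x)) PP) has_field_derivative
  PP j * ((\<Sum>i=1..n. Q i * ((Q i - 1) * P i + QQ i * PP i - ka i - rh i)) - th1)
  + ((\<Sum>i=1..n. (Q i - 1) * P i + QQ i * PP i - ka i - rh i) - th3) * (Q j * PP j)) (at (QQ j))"
  unfolding H11_def apply (rule derivative_eq_intros upd_deriv refl | assumption)+
  apply (simp only: fun_upd_triv mult_zero_left mult_zero_right add_0_right add_0_left diff_0_right diff_0 ring_distribs ifm)
  apply (simp add: sum.distrib sum_subtractf sum_if_const sum_lt cong: if_cong)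
  apply (simp add: algebra_simps sum.distrib sum_subtractf sum_negf sum_distrib_left)?
  done

lemma d_H10_qq: "j \<in> {1..n} \<Longrightarrow> ((\<lambda>x. H10 n th1 ka rh Q P (QQ(j:=x)) PP) has_field_derivative 
  ((\<Sum>i=1..n. Q i * P i) + th1) * P j
  + (\<Sum>k=j+1..n. Q j * P k * PP j) - (\<Sum>i=1..j-1. Q i * P j * PP i)) (at (QQ j))"
  unfolding H10_def apply (rule derivative_eq_intros upd_deriv refl | assumption)+
  apply (simp only: fun_upd_triv mult_zero_left mult_zero_right add_0_right add_0_left diff_0_right diff_0 ring_distribs ifm)
  apply (simp add: sum.distrib sum_subtractf sum_if_const sum_lt cong: if_cong)
  apply (simp add: algebra_simps sum.distrib sum_subtractf sum_negf sum_distrib_left)?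
  done

lemma d_H1t_pp: "j \<in> {1..n} \<Longrightarrow> ((\<lambda>x. H1t n th1 th2 Q P QQ (PP(j:=x))) has_field_derivative
  - Q j * ((\<Sum>i=1..n. QQ i * (PP i - P i)) + th2) + QQ j * ((\<Sum>i=1..n. Q i * (P i - PP i)) + th1)) (at (PP j))"
  unfolding H1t_def apply (rule derivative_eq_intros upd_deriv refl | assumption)+
  apply (simp only: fun_upd_triv mult_zero_left mult_zero_right add_0_right add_0_left diff_0_right diff_0 ring_distribs ifm)
  apply (simp add: sum.distrib sum_subtractf sum_if_const sum_lt cong: if_cong)
  apply (simp add: algebra_simps sum.distrib sum_subtractf sum_negf sum_distrib_left)?
  done

lemma d_H11_pp: "j \<in> {1..n} \<Longrightarrow> ((\<lambda>x. H11 n th1 th3 ka rh Q P QQ (PP(j:=x))) has_field_derivative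
  QQ j * ((\<Sum>i=1..n. Q i * ((Q i - 1) * P i + QQ i * PP i - ka i - rh i)) - th1)
  + ((\<Sum>i=1..n. (Q i - 1) * P i + QQ i * PP i - ka i - rh i) - th3) * (Q j * QQ j)) (at (PP j))"
  unfolding H11_def apply (rule derivative_eq_intros upd_deriv refl | assumption)+
  apply (simp only: fun_upd_triv mult_zero_left mult_zero_right add_0_right add_0_left diff_0_right diff_0 ring_distribs ifm)
  apply (simp add: sum.distrib sum_subtractf sum_if_const sum_lt cong: if_cong)
  apply (simp add: algebra_simps sum.distrib sum_subtractf sum_negf sum_distrib_left)?
  done

lemma d_H10_pp: "j \<in> {1..n} \<Longrightarrow> ((\<lambda>x. H10 n th1 ka rh Q P QQ (PP(j:=x))) has_field_derivative 
  (\<Sum>k=j+1..n. Q j * P k * (QQ j - QQ k))) (at (PP j))"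
  unfolding H10_def apply (rule derivative_eq_intros upd_deriv refl | assumption)+
  apply (simp only: fun_upd_triv mult_zero_left mult_zero_right add_0_right add_0_left diff_0_right diff_0 ring_distribs ifm)
  apply (simp add: sum.distrib sum_subtractf sum_if_const sum_lt cong: if_cong)
  apply (simp add: algebra_simps sum.distrib sum_subtractf sum_negf sum_distrib_left)?
  done


lemma ifmR: "(if b then 1 else 0) * (a::complex) = (if b then a else 0)"
  "a * (if b then 1 else 0) = (if b then a else 0)"
  "(if b then x else 0) * a = (if b then x * a else 0)"
  "a * (if b then x else 0) = (if b then a * x else 0)"
  "- (if b then x else 0) = (if b then - x else 0)"
  "(if b then x else 0) + (if b then y else 0) = (if b then x + y else 0)"
  "(if b then x else 0) - (if b then y else 0) = (if b then x - y else 0)"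
 by auto
lemma if_conj: "(if a \<and> b then x else (0::complex)) = (if a then if b then x else 0 else 0)" by auto
lemma sum_if_constR: "(\<Sum>k\<in>A. if c then f k else 0) = (if c then sum f A else 0)" by auto

lemma sumE: "(\<Sum>l=0..m. E a b k l * f l) = (if k = a \<and> b \<le> m then f b else 0)"
  unfolding E_def by (cases "k = a") (auto simp: ifmR)

lemma swap_rule: "(\<Sum>l\<in>L. (\<Sum>j\<in>J. X j l) * (f l::complex)) = (\<Sum>j\<in>J. \<Sum>l\<in>L. X j l * f l)"
  by (simp add: sum_distrib_right sum.swap[of _ J])

lemma lin: "(\<Sum>l\<in>L. (X l + Y l) * (f l::complex)) = (\<Sum>l\<in>L. X l * f l) + (\<Sum>l\<in>L. Y l * f l)"
  "(\<Sum>l\<in>L. (X l - Y l) * (f l::complex)) = (\<Sum>l\<in>L. X l * f l) - (\<Sum>l\<in>L. Y l * f l)"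
  "(\<Sum>l\<in>L. (c * X l) * (f l::complex)) = c * (\<Sum>l\<in>L. X l * f l)"
  "(\<Sum>l\<in>L. (- X l) * (f l::complex)) = - (\<Sum>l\<in>L. X l * f l)"
  by (auto simp: sum.distrib sum_subtractf sum_distrib_left sum_negf algebra_simps)

lemmas rowsimps = lin swap_rule sumE

lemma R11_0: "(\<Sum>l=0..2*n. A11 n th3 ka rh 0 l * f l) = (th3 * f 0 + (\<Sum>j=1..n. f j))"
  unfolding A11_def
  apply (simp only: rowsimps)
  apply (auto simp: ifmR if_conj sum_if_constR sum.distrib sum_distrib_left cong: if_cong)
  apply (simp_all add: sum.distrib sum_distrib_left algebra_simps)?
  done

lemma R11_i: "i \<in> {1..n} \<Longrightarrow> (\<Sum>l=0..2*n. A11 n th3 ka rh i l * f l) = (ka i + rh i) * (th3 * f 0 + (\<Sum>j=1..n. f j))"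
  unfolding A11_def
  apply (simp only: rowsimps)
  apply (auto simp: ifmR if_conj sum_if_constR sum.distrib sum_distrib_left cong: if_cong)
  apply (simp_all add: sum.distrib sum_distrib_left algebra_simps)?
  done

lemma R11_ni: "i \<in> {1..n} \<Longrightarrow> (\<Sum>l=0..2*n. A11 n th3 ka rh (n+i) l * f l) = 0"
  unfolding A11_def
  apply (simp only: rowsimps)
  apply (auto simp: ifmR if_conj sum_if_constR sum.distrib sum_distrib_left cong: if_cong)
  apply (simp_all add: sum.distrib sum_distrib_left algebra_simps)?
  done

lemma R01_0: "(\<Sum>l=0..2*n. A01 n ka rh 0 l * f l) = (ka 0 + rh 1) * f 0 - (\<Sum>j=1..n. f j) - (\<Sum>j=1..n. f (n+j))"
  unfolding A01_def
  apply (simp only: rowsimps)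
  apply (auto simp: ifmR if_conj sum_if_constR sum.distrib sum_distrib_left cong: if_cong)
  apply (simp_all add: sum.distrib sum_distrib_left algebra_simps)?
  done

lemma R01_i: "i \<in> {1..n} \<Longrightarrow> (\<Sum>l=0..2*n. A01 n ka rh i l * f l) = (rh 1 - rh i) * f i - (ka i + rh i) * (\<Sum>j=i+1..n. f j)"
  unfolding A01_def
  apply (simp only: rowsimps)
  apply (auto simp: ifmR if_conj sum_if_constR sum.distrib sum_distrib_left cong: if_cong)
  apply (simp_all add: sum.distrib sum_distrib_left algebra_simps)?
  done

lemma R01_ni: "i \<in> {1..n} \<Longrightarrow> (\<Sum>l=0..2*n. A01 n ka rh (n+i) l * f l) = (rh 1 - rh i) * f (n+i) - (ka i + rh i) * (\<Sum>j=i+1..n. f (n+j))"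
  unfolding A01_def
  apply (simp only: rowsimps)
  apply (auto simp: ifmR if_conj sum_if_constR sum.distrib sum_distrib_left cong: if_cong)
  apply (simp_all add: sum.distrib sum_distrib_left algebra_simps)?
  done

lemma Rt_0: "(\<Sum>l=0..2*n. At n th2 ka rh 0 l * f l) = th2 * f 0 + (\<Sum>j=1..n. f (n+j))"
  unfolding At_def
  apply (simp only: rowsimps)
  apply (auto simp: ifmR if_conj sum_if_constR sum.distrib sum_distrib_left cong: if_cong)
  apply (simp_all add: sum.distrib sum_distrib_left algebra_simps)?
  done

lemma Rt_i: "i \<in> {1..n} \<Longrightarrow> (\<Sum>l=0..2*n. At n th2 ka rh i l * f l) = 0"
  unfolding At_def
  apply (simp only: rowsimps)
  apply (auto simp: ifmR if_conj sum_if_constR sum.distrib sum_distrib_left cong: if_cong)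
  apply (simp_all add: sum.distrib sum_distrib_left algebra_simps)?
  done

lemma Rt_ni: "i \<in> {1..n} \<Longrightarrow> (\<Sum>l=0..2*n. At n th2 ka rh (n+i) l * f l) = (ka i + rh i) * (th2 * f 0 + (\<Sum>j=1..n. f (n+j)))"
  unfolding At_def
  apply (simp only: rowsimps)
  apply (auto simp: ifmR if_conj sum_if_constR sum.distrib sum_distrib_left cong: if_cong)
  apply (simp_all add: sum.distrib sum_distrib_left algebra_simps)?
  done

lemma R12_0: "(\<Sum>l=0..2*n. A12 n th2 th3 0 l * f l) = 0"
  unfolding A12_def
  apply (simp only: rowsimps)
  apply (auto simp: ifmR if_conj sum_if_constR sum.distrib sum_distrib_left cong: if_cong)
  apply (simp_all add: sum.distrib sum_distrib_left algebra_simps)?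
  done

lemma R12_i: "i \<in> {1..n} \<Longrightarrow> (\<Sum>l=0..2*n. A12 n th2 th3 i l * f l) = th2 * f i - th3 * f (n+i)"
  unfolding A12_def
  apply (simp only: rowsimps)
  apply (auto simp: ifmR if_conj sum_if_constR sum.distrib sum_distrib_left cong: if_cong)
  apply (simp_all add: sum.distrib sum_distrib_left algebra_simps)?
  done

lemma R12_ni: "i \<in> {1..n} \<Longrightarrow> (\<Sum>l=0..2*n. A12 n th2 th3 (n+i) l * f l) = - th2 * f i + th3 * f (n+i)"
  unfolding A12_def
  apply (simp only: rowsimps)
  apply (auto simp: ifmR if_conj sum_if_constR sum.distrib sum_distrib_left cong: if_cong)
  apply (simp_all add: sum.distrib sum_distrib_left algebra_simps)?
  done

lemma R02_0: "(\<Sum>l=0..2*n. A02 n th2 ka rh 0 l * f l) = 0"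
  unfolding A02_def
  apply (simp only: rowsimps)
  apply (auto simp: ifmR if_conj sum_if_constR sum.distrib sum_distrib_left cong: if_cong)
  apply (simp_all add: sum.distrib sum_distrib_left algebra_simps)?
  done

lemma R02_i: "i \<in> {1..n} \<Longrightarrow> (\<Sum>l=0..2*n. A02 n th2 ka rh i l * f l) = 0"
  unfolding A02_def
  apply (simp only: rowsimps)
  apply (auto simp: ifmR if_conj sum_if_constR sum.distrib sum_distrib_left cong: if_cong)
  apply (simp_all add: sum.distrib sum_distrib_left algebra_simps)?
  done

lemma R02_ni: "i \<in> {1..n} \<Longrightarrow> (\<Sum>l=0..2*n. A02 n th2 ka rh (n+i) l * f l) = - th2 * (ka i + rh i) * f 0 + th2 * f i - (ka i + rh i) * (\<Sum>j=1..i-1. f (n+j)) + (th2 + ka 0 - ka i) * f (n+i)"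
  unfolding A02_def
  apply (simp only: rowsimps)
  apply (auto simp: ifmR if_conj sum_if_constR sum.distrib sum_distrib_left cong: if_cong)
  apply (simp_all add: sum.distrib sum_distrib_left algebra_simps)?
  apply (rule arg_cong2[where f="(+)"]; rule sum.cong; auto simp: add.commute)
  done



lemma split3: "(\<Sum>l\<in>L. (a l / x + b l / y + c l / u) * (f l::complex)) =
   (\<Sum>l\<in>L. a l * f l) / x + (\<Sum>l\<in>L. b l * f l) / y + (\<Sum>l\<in>L. c l * f l) / u"
  "(\<Sum>l\<in>L. (- a l / x + b l / y + c l / u) * (f l::complex)) =
   - (\<Sum>l\<in>L. a l * f l) / x + (\<Sum>l\<in>L. b l * f l) / y + (\<Sum>l\<in>L. c l * f l) / u"
proof -
  have e1: "\<And>l. (a l / x + b l / y + c l / u) * f l = a l * f l / x + b l * f l / y + c l * f l / u"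
    by (simp add: algebra_simps)
  have e2: "\<And>l. (- a l / x + b l / y + c l / u) * f l = - (a l * f l / x) + b l * f l / y + c l * f l / u"
    by (simp add: algebra_simps)
  show "(\<Sum>l\<in>L. (a l / x + b l / y + c l / u) * (f l::complex)) =
   (\<Sum>l\<in>L. a l * f l) / x + (\<Sum>l\<in>L. b l * f l) / y + (\<Sum>l\<in>L. c l * f l) / u"
    unfolding e1 by (simp add: sum.distrib sum_divide_distrib)
  show "(\<Sum>l\<in>L. (- a l / x + b l / y + c l / u) * (f l::complex)) =
   - (\<Sum>l\<in>L. a l * f l) / x + (\<Sum>l\<in>L. b l * f l) / y + (\<Sum>l\<in>L. c l * f l) / u"
    unfolding e2 by (simp add: sum.distrib sum_divide_distrib sum_negf sum_subtractf)
qed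

lemma mymult: "(f has_field_derivative DD) (at (x::complex)) \<Longrightarrow> (g has_field_derivative EE) (at x) \<Longrightarrow>
    ((\<lambda>x. f x * g x) has_field_derivative DD * g x + f x * EE) (at x)"
  by (rule DERIV_cong[OF DERIV_mult']) (auto simp: algebra_simps)

lemma has_pderiv_mult: "has_pderiv f i Df z \<Longrightarrow> has_pderiv g i Dg z \<Longrightarrow>
   has_pderiv (\<lambda>z. f z * g z) i (Df * g z + f z * Dg) z"
  proof -
  assume a: "has_pderiv f i Df z" "has_pderiv g i Dg z"
  obtain a b where z: "z = (a, b)" by (cases z)
  show ?thesis using a unfolding has_pderiv_def z
    by (auto intro: mymult)
qed

lemma has_pderiv_uminus: "has_pderiv f i Df z \<Longrightarrow> has_pderiv (\<lambda>z. - f z) i (- Df) z"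
  unfolding has_pderiv_def by (auto intro: DERIV_minus)

lemma has_pderiv_eq: "has_pderiv f i D z \<Longrightarrow> D = D' \<Longrightarrow> has_pderiv f i D' z" by simp

lemma dH1_q: "j \<in> {1..n} \<Longrightarrow> dH_dq (H1 n th1 th2 th3 ka rh t1 t2) j Q P QQ PP =
  (P j - PP j) * ((\<Sum>i=1..n. QQ i * (PP i - P i)) + th2) / (t1 - t2)
  + (P j * ((\<Sum>i=1..n. Q i * ((Q i - 1) * P i + QQ i * PP i - ka i - rh i)) - th1)
  + ((\<Sum>i=1..n. (Q i - 1) * P i + QQ i * PP i - ka i - rh i) - th3) *
     ((Q j - 1) * P j + QQ j * PP j - ka j - rh j + Q j * P j)) / (t1 - 1)
  + (P j * ((\<Sum>i=1..n. (Q i + QQ i - 1) * P i) + ka 0) + P j * ((\<Sum>i=1..n. Q i * P i) + th1) - ka j * P j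
  + (\<Sum>k=j+1..n. P k * ((Q j - Q k) * P j + (QQ j - QQ k) * PP j - ka j - rh j) + Q j * P k * P j)
  - (\<Sum>i=1..j-1. Q i * P i * P j)) / t1"
  unfolding dH_dq_def H1_def
  by (rule DERIV_imp_deriv, intro DERIV_add DERIV_cdivide d_H1t_q d_H11_q d_H10_q)

lemma dH1_pp: "j \<in> {1..n} \<Longrightarrow> dH_dpp (H1 n th1 th2 th3 ka rh t1 t2) j Q P QQ PP =
  (- Q j * ((\<Sum>i=1..n. QQ i * (PP i - P i)) + th2) + QQ j * ((\<Sum>i=1..n. Q i * (P i - PP i)) + th1)) / (t1 - t2)
  + (QQ j * ((\<Sum>i=1..n. Q i * ((Q i - 1) * P i + QQ i * PP i - ka i - rh i)) - th1)
  + ((\<Sum>i=1..n. (Q i - 1) * P i + QQ i * PP i - ka i - rh i) - th3) * (Q j * QQ j)) / (t1 - 1)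
  + (\<Sum>k=j+1..n. Q j * P k * (QQ j - QQ k)) / t1"
  unfolding dH_dpp_def H1_def
  by (rule DERIV_imp_deriv, intro DERIV_add DERIV_cdivide d_H1t_pp d_H11_pp d_H10_pp)

lemma dH2_q: "j \<in> {1..n} \<Longrightarrow> dH_dq (H2 n th1 th2 th3 ka rh t1 t2) j QQ PP Q P =
  ((\<Sum>i=1..n. Q i * (P i - PP i)) + th2) * (PP j - P j) / (t2 - t1)
  + (PP j * ((\<Sum>i=1..n. Q i * ((Q i - 1) * P i + QQ i * PP i - ka i - rh i)) - th2)
  + ((\<Sum>i=1..n. (Q i - 1) * P i + QQ i * PP i - ka i - rh i) - th3) * (Q j * PP j)) / (t2 - 1)
  + (((\<Sum>i=1..n. Q i * P i) + th2) * P j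
  + (\<Sum>k=j+1..n. Q j * P k * PP j) - (\<Sum>i=1..j-1. Q i * P j * PP i)) / t2"
  unfolding dH_dq_def H2_def H1_def
  by (rule DERIV_imp_deriv, intro DERIV_add DERIV_cdivide d_H1t_qq d_H11_qq d_H10_qq)

lemma dH2_pp: "j \<in> {1..n} \<Longrightarrow> dH_dpp (H2 n th1 th2 th3 ka rh t1 t2) j QQ PP Q P =
  (Q j * ((\<Sum>i=1..n. QQ i * (PP i - P i)) + th1) - QQ j * ((\<Sum>i=1..n. Q i * (P i - PP i)) + th2)) / (t2 - t1)
  + ((Q j - 1) * ((\<Sum>i=1..n. Q i * ((Q i - 1) * P i + QQ i * PP i - ka i - rh i)) - th2)
  + ((\<Sum>i=1..n. (Q i - 1) * P i + QQ i * PP i - ka i - rh i) - th3) * (Q j * (Q j - 1))) / (t2 - 1)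
  + (Q j * ((\<Sum>i=1..n. (Q i + QQ i - 1) * P i) + ka 0) + (Q j + QQ j - 1) * ((\<Sum>i=1..n. Q i * P i) + th2) - ka j * Q j
  + (\<Sum>i=1..j-1. Q i * ((Q i - Q j) * P i + (QQ i - QQ j) * PP i - ka i - rh i))
  + (\<Sum>k=j+1..n. Q j * P k * (Q j - Q k))) / t2"
  unfolding dH_dpp_def H2_def H1_def
  by (rule DERIV_imp_deriv, intro DERIV_add DERIV_cdivide d_H1t_p d_H11_p d_H10_p)



lemma sum_split_at: "j \<in> {1..(n::nat)} \<Longrightarrow> (\<Sum>i=1..n. f i) = (\<Sum>i=1..j-1. f i) + f j + (\<Sum>i=j+1..n. (f i::complex))"
proof -
  assume j: "j \<in> {1..n}"
  have "{1..n} = ({1..j-1} \<union> {j}) \<union> {j+1..n}" using j by (auto simp: le_diff_conv2)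
  then have "sum f {1..n} = sum f (({1..j-1} \<union> {j}) \<union> {j+1..n})" by simp
  also have "\<dots> = sum f ({1..j-1} \<union> {j}) + sum f {j+1..n}" by (rule sum.union_disjoint) auto
  also have "sum f ({1..j-1} \<union> {j}) = sum f {1..j-1} + f j" by (subst sum.union_disjoint) auto
  finally show ?thesis by simp
qed

lemma sumfacts:
  fixes Q P QQ PP :: "nat \<Rightarrow> complex"
  assumes PP0': "\<forall>i\<in>{1..n}. PP i = 0"
    and QP': "\<forall>i\<in>{1..n}. Q i * P i = ka i + rh i"
  shows
 "(\<Sum>i=1..n. QQ i * (PP i - P i)) = - (\<Sum>i=1..n. QQ i * P i)"
 "(\<Sum>i=1..n. Q i * ((Q i - 1) * P i + QQ i * PP i - ka i - rh i)) = - (\<Sum>i=1..n. ka i + rh i)"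
 "(\<Sum>i=1..n. (Q i - 1) * P i + QQ i * PP i - ka i - rh i) = - (\<Sum>i=1..n. P i)"
 "(\<Sum>i=1..n. (Q i + QQ i - 1) * P i) = (\<Sum>i=1..n. ka i + rh i) + (\<Sum>i=1..n. QQ i * P i) - (\<Sum>i=1..n. P i)"
 "(\<Sum>i=1..n. Q i * P i) = (\<Sum>i=1..n. ka i + rh i)"
 "(\<Sum>i=1..n. Q i * (P i - PP i)) = (\<Sum>i=1..n. ka i + rh i)"
 "(\<Sum>i=1..n. QQ i * ((QQ i - 1) * PP i + Q i * P i - ka i - rh i)) = 0"
 "(\<Sum>i=1..n. (QQ i - 1) * PP i + Q i * P i - ka i - rh i) = 0"
 "(\<Sum>i=1..n. QQ i * PP i) = 0"
 "(\<Sum>i=1..n. (QQ i + Q i - 1) * PP i) = 0"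
proof -
  have PP0: "\<And>i. i \<in> {1..n} \<Longrightarrow> PP i = 0" and QP: "\<And>i. i \<in> {1..n} \<Longrightarrow> Q i * P i = ka i + rh i"
    using PP0' QP' by auto
  show "(\<Sum>i=1..n. QQ i * (PP i - P i)) = - (\<Sum>i=1..n. QQ i * P i)"
    by (simp add: sum_negf[symmetric]) (rule sum.cong, auto simp: PP0)
  have "(\<Sum>i=1..n. Q i * ((Q i - 1) * P i + QQ i * PP i - ka i - rh i)) = (\<Sum>i=1..n. - (ka i + rh i))"
  proof (rule sum.cong)
    fix i assume i: "i \<in> {1..n}"
    show "Q i * ((Q i - 1) * P i + QQ i * PP i - ka i - rh i) = - (ka i + rh i)"
      using PP0[OF i] QP[OF i] by algebra
  qed simp
  then show "(\<Sum>i=1..n. Q i * ((Q i - 1) * P i + QQ i * PP i - ka i - rh i)) = - (\<Sum>i=1..n. ka i + rh i)"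
    by (simp only: sum_negf)
  have "(\<Sum>i=1..n. (Q i - 1) * P i + QQ i * PP i - ka i - rh i) = (\<Sum>i=1..n. - P i)"
  proof (rule sum.cong)
    fix i assume i: "i \<in> {1..n}"
    show "(Q i - 1) * P i + QQ i * PP i - ka i - rh i = - P i"
      using PP0[OF i] QP[OF i] by algebra
  qed simp
  then show "(\<Sum>i=1..n. (Q i - 1) * P i + QQ i * PP i - ka i - rh i) = - (\<Sum>i=1..n. P i)"
    by (simp only: sum_negf)
  have "(\<Sum>i=1..n. (Q i + QQ i - 1) * P i) = (\<Sum>i=1..n. (ka i + rh i) + QQ i * P i - P i)"
  proof (rule sum.cong)
    fix i assume i: "i \<in> {1..n}"
    show "(Q i + QQ i - 1) * P i = (ka i + rh i) + QQ i * P i - P i"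
      using PP0[OF i] QP[OF i] by algebra
  qed simp
  then show "(\<Sum>i=1..n. (Q i + QQ i - 1) * P i) = (\<Sum>i=1..n. ka i + rh i) + (\<Sum>i=1..n. QQ i * P i) - (\<Sum>i=1..n. P i)"
    by (simp add: sum.distrib sum_subtractf)
  show "(\<Sum>i=1..n. Q i * P i) = (\<Sum>i=1..n. ka i + rh i)"
    by (rule sum.cong) (auto simp: QP)
  show "(\<Sum>i=1..n. Q i * (P i - PP i)) = (\<Sum>i=1..n. ka i + rh i)"
    by (rule sum.cong) (auto simp: QP PP0)
  show "(\<Sum>i=1..n. QQ i * ((QQ i - 1) * PP i + Q i * P i - ka i - rh i)) = 0"
    by (rule sum.neutral) (auto simp: QP PP0)
  show "(\<Sum>i=1..n. (QQ i - 1) * PP i + Q i * P i - ka i - rh i) = 0"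
    by (rule sum.neutral) (auto simp: QP PP0)
  show "(\<Sum>i=1..n. QQ i * PP i) = 0"
    by (rule sum.neutral) (auto simp: PP0)
  show "(\<Sum>i=1..n. (QQ i + Q i - 1) * PP i) = 0"
    by (rule sum.neutral) (auto simp: PP0)
qed

lemma sumfacts_j:
  fixes Q P QQ PP :: "nat \<Rightarrow> complex"
  assumes PP0': "\<forall>i\<in>{1..n}. PP i = 0"
    and QP': "\<forall>i\<in>{1..n}. Q i * P i = ka i + rh i"
    and j: "j \<in> {1..n}"
  shows
 "(\<Sum>k=j+1..n. P k * ((Q j - Q k) * P j + (QQ j - QQ k) * PP j - ka j - rh j) + Q j * P k * P j)
    = (ka j + rh j) * (\<Sum>k=j+1..n. P k) - P j * (\<Sum>k=j+1..n. ka k + rh k)"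
 "(\<Sum>i=1..j-1. Q i * P i * P j) = P j * (\<Sum>i=1..j-1. ka i + rh i)"
 "(\<Sum>k=j+1..n. Q j * P k * (QQ j - QQ k)) = Q j * QQ j * (\<Sum>k=j+1..n. P k) - Q j * (\<Sum>k=j+1..n. QQ k * P k)"
 "(\<Sum>k=j+1..n. QQ j * PP k * P j) = 0"
 "(\<Sum>i=1..j-1. QQ i * PP j * P i) = 0"
 "(\<Sum>i=1..j-1. QQ i * ((QQ i - QQ j) * PP i + (Q i - Q j) * P i - ka i - rh i)) = - Q j * (\<Sum>i=1..j-1. QQ i * P i)"
 "(\<Sum>k=j+1..n. QQ j * PP k * (QQ j - QQ k)) = 0"
proof -
  have PP0: "\<And>i. i \<in> {1..n} \<Longrightarrow> PP i = 0" and QP: "\<And>i. i \<in> {1..n} \<Longrightarrow> Q i * P i = ka i + rh i"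
    using PP0' QP' by auto
  have "(\<Sum>k=j+1..n. P k * ((Q j - Q k) * P j + (QQ j - QQ k) * PP j - ka j - rh j) + Q j * P k * P j)
    = (\<Sum>k=j+1..n. (ka j + rh j) * P k - P j * (ka k + rh k))"
  proof (rule sum.cong)
    fix k assume k: "k \<in> {j+1..n}"
    then have k': "k \<in> {1..n}" using j by auto
    show "P k * ((Q j - Q k) * P j + (QQ j - QQ k) * PP j - ka j - rh j) + Q j * P k * P j
       = (ka j + rh j) * P k - P j * (ka k + rh k)"
      using PP0[OF j] QP[OF j] QP[OF k'] by algebra
  qed simp
  then show "(\<Sum>k=j+1..n. P k * ((Q j - Q k) * P j + (QQ j - QQ k) * PP j - ka j - rh j) + Q j * P k * P j)
    = (ka j + rh j) * (\<Sum>k=j+1..n. P k) - P j * (\<Sum>k=j+1..n. ka k + rh k)"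
    by (simp add: sum_subtractf sum_distrib_left)
  have "(\<Sum>i=1..j-1. Q i * P i * P j) = (\<Sum>i=1..j-1. P j * (ka i + rh i))"
  proof (rule sum.cong)
    fix i assume i: "i \<in> {1..j-1}"
    then have i': "i \<in> {1..n}" using j by auto
    show "Q i * P i * P j = P j * (ka i + rh i)" using QP[OF i'] by algebra
  qed simp
  then show "(\<Sum>i=1..j-1. Q i * P i * P j) = P j * (\<Sum>i=1..j-1. ka i + rh i)"
    by (simp add: sum_distrib_left)
  show "(\<Sum>k=j+1..n. Q j * P k * (QQ j - QQ k)) = Q j * QQ j * (\<Sum>k=j+1..n. P k) - Q j * (\<Sum>k=j+1..n. QQ k * P k)"
    by (simp add: sum_distrib_left sum_subtractf[symmetric] algebra_simps)
  show "(\<Sum>k=j+1..n. QQ j * PP k * P j) = 0"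
    by (rule sum.neutral) (use j in \<open>auto simp: PP0\<close>)
  show "(\<Sum>i=1..j-1. QQ i * PP j * P i) = 0"
    by (rule sum.neutral) (use j in \<open>auto simp: PP0\<close>)
  have "(\<Sum>i=1..j-1. QQ i * ((QQ i - QQ j) * PP i + (Q i - Q j) * P i - ka i - rh i)) = (\<Sum>i=1..j-1. - Q j * (QQ i * P i))"
  proof (rule sum.cong)
    fix i assume i: "i \<in> {1..j-1}"
    then have i': "i \<in> {1..n}" using j by auto
    show "QQ i * ((QQ i - QQ j) * PP i + (Q i - Q j) * P i - ka i - rh i) = - Q j * (QQ i * P i)"
      using PP0[OF i'] QP[OF i'] by algebra
  qed simp
  then show "(\<Sum>i=1..j-1. QQ i * ((QQ i - QQ j) * PP i + (Q i - Q j) * P i - ka i - rh i)) = - Q j * (\<Sum>i=1..j-1. QQ i * P i)"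
    by (simp add: sum_distrib_left)
  show "(\<Sum>k=j+1..n. QQ j * PP k * (QQ j - QQ k)) = 0"
    by (rule sum.neutral) (use j in \<open>auto simp: PP0\<close>)
qed

theorem theorem3p2:
  fixes n :: nat
    and th1 th2 th3 :: complex
    and ka rh :: "nat \<Rightarrow> complex"
    and U :: "(complex \<times> complex) set"
    and q p qq pp :: "nat \<Rightarrow> complex \<times> complex \<Rightarrow> complex"
    and w0 :: "complex \<times> complex \<Rightarrow> complex"
    and w :: "nat \<Rightarrow> complex \<times> complex \<Rightarrow> complex"
  assumes n: "n \<ge> 1"
    and U_open: "open U"
    and U_sing: "\<And>t1 t2. (t1, t2) \<in> U \<Longrightarrow>
                   t1 \<noteq> 0 \<and> t1 \<noteq> 1 \<and> t2 \<noteq> 0 \<and> t2 \<noteq> 1 \<and> t1 \<noteq> t2"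
    and ham: "\<And>i j t1 t2. i \<in> {1, 2} \<Longrightarrow> j \<in> {1..n} \<Longrightarrow> (t1, t2) \<in> U \<Longrightarrow>
       let Hi = Ham i n th1 th2 th3 ka rh t1 t2;
           Q = (\<lambda>k. q k (t1, t2)); P = (\<lambda>k. p k (t1, t2));
           QQ = (\<lambda>k. qq k (t1, t2)); PP = (\<lambda>k. pp k (t1, t2))
       in has_pderiv (q j) i (dH_dp Hi j Q P QQ PP) (t1, t2)
        \<and> has_pderiv (p j) i (- dH_dq Hi j Q P QQ PP) (t1, t2)
        \<and> has_pderiv (qq j) i (dH_dpp Hi j Q P QQ PP) (t1, t2)
        \<and> has_pderiv (pp j) i (- dH_dqq Hi j Q P QQ PP) (t1, t2)"
    and constr1: "\<And>i z. i \<in> {1..n} \<Longrightarrow> z \<in> U \<Longrightarrow> q i z * p i z - ka i - rh i = 0"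
    and constr2: "\<And>i z. i \<in> {1..n} \<Longrightarrow> z \<in> U \<Longrightarrow> pp i z = 0"
    and constr3: "th1 + (\<Sum>j=1..n. ka j + rh j) = 0"
    and w0_nz: "\<And>z. z \<in> U \<Longrightarrow> w0 z \<noteq> 0"
    and w0_d1: "\<And>t1 t2. (t1, t2) \<in> U \<Longrightarrow> has_pderiv w0 1
       (w0 (t1, t2) * (((\<Sum>j=1..n. p j (t1, t2)) + th3) / (t1 - 1)
          + ((\<Sum>j=1..n. (qq j (t1, t2) - 1) * p j (t1, t2)) + ka 0 + rh 1) / t1
          + (- (\<Sum>j=1..n. qq j (t1, t2) * p j (t1, t2)) + th2) / (t1 - t2))) (t1, t2)"
    and w0_d2: "\<And>t1 t2. (t1, t2) \<in> U \<Longrightarrow> has_pderiv w0 2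
       (w0 (t1, t2) * (- ((- (\<Sum>j=1..n. qq j (t1, t2) * p j (t1, t2)) + th2) / (t1 - t2)))) (t1, t2)"
    and w_def: "\<And>k z. w k z = (if k = 0 then w0 z
                          else if k \<le> n then p k z * w0 z
                          else - qq (k - n) z * p (k - n) z * w0 z)"
  shows "\<forall>t1 t2 k. (t1, t2) \<in> U \<longrightarrow> k \<in> {0..2*n} \<longrightarrow>
      has_pderiv (w k) 1
        (\<Sum>l=0..2*n. (A11 n th3 ka rh k l / (t1 - 1) + A01 n ka rh k l / t1
                      + At n th2 ka rh k l / (t1 - t2)) * w l (t1, t2)) (t1, t2)
    \<and> has_pderiv (w k) 2
        (\<Sum>l=0..2*n. (- At n th2 ka rh k l / (t1 - t2) + A12 n th2 th3 k l / (t2 - 1)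
                      + A02 n th2 ka rh k l / t2) * w l (t1, t2)) (t1, t2)"
  proof (intro allI impI)
  fix t1 t2 k
  assume z: "(t1, t2) \<in> U" and k: "k \<in> {0..2*n}"
  have nz: "t1 \<noteq> 0" "t1 \<noteq> 1" "t2 \<noteq> 0" "t2 \<noteq> 1" "t1 \<noteq> t2" using U_sing[OF z] by auto
  have nz2: "t1 - 1 \<noteq> 0" "t2 - 1 \<noteq> 0" "t1 - t2 \<noteq> 0" "t2 - t1 \<noteq> 0" using nz by auto
  define Q where "Q = (\<lambda>i. q i (t1,t2))"
  define P where "P = (\<lambda>i. p i (t1,t2))"
  define QQ where "QQ = (\<lambda>i. qq i (t1,t2))"
  define PP where "PP = (\<lambda>i. pp i (t1,t2))"
  define W where "W = w0 (t1,t2)"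
  have qv: "\<And>i. q i (t1,t2) = Q i" "\<And>i. p i (t1,t2) = P i" "\<And>i. qq i (t1,t2) = QQ i"
     "\<And>i. pp i (t1,t2) = PP i" "w0 (t1,t2) = W" by (simp_all add: Q_def P_def QQ_def PP_def W_def)
  have PP0: "\<And>i. i \<in> {1..n} \<Longrightarrow> PP i = 0" using constr2 z by (simp add: PP_def)
  have QP: "\<And>i. i \<in> {1..n} \<Longrightarrow> Q i * P i = ka i + rh i"
  proof -
    fix i assume i: "i \<in> {1..n}"
    from constr1[OF i z] show "Q i * P i = ka i + rh i" by (simp add: Q_def P_def algebra_simps)
  qed
  have PP0': "\<forall>i\<in>{1..n}. PP i = 0" and QP': "\<forall>i\<in>{1..n}. Q i * P i = ka i + rh i"
    using PP0 QP by auto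
  note SF = sumfacts[OF PP0' QP']
  note SJ = sumfacts_j[OF PP0' QP']
  have kaj: "\<And>j. j \<in> {1..n} \<Longrightarrow> ka j = Q j * P j - rh j" using QP by (simp add: algebra_simps)
  have swapdiv: "\<And>x. x / (t2 - t1) = - (x / (t1 - t2))"
    by (metis minus_diff_eq divide_minus_right)
  have hamj: "\<And>(i::nat) j. i \<in> {1,2} \<Longrightarrow> j \<in> {1..n} \<Longrightarrow>
     has_pderiv (p j) i (- dH_dq (Ham i n th1 th2 th3 ka rh t1 t2) j Q P QQ PP) (t1,t2)
   \<and> has_pderiv (qq j) i (dH_dpp (Ham i n th1 th2 th3 ka rh t1 t2) j Q P QQ PP) (t1,t2)"
  proof -
    fix i :: nat and j assume i: "i \<in> {1,2}" and j: "j \<in> {1..n}"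
    from ham[OF i j z] show "?thesis i j" unfolding Let_def Q_def P_def QQ_def PP_def by blast
  qed
  have dp1: "\<And>j. j \<in> {1..n} \<Longrightarrow> has_pderiv (p j) 1 (- dH_dq (H1 n th1 th2 th3 ka rh t1 t2) j Q P QQ PP) (t1,t2)"
    using hamj[of 1] by (simp add: Ham_def)
  have dqq1: "\<And>j. j \<in> {1..n} \<Longrightarrow> has_pderiv (qq j) 1 (dH_dpp (H1 n th1 th2 th3 ka rh t1 t2) j Q P QQ PP) (t1,t2)"
    using hamj[of 1] by (simp add: Ham_def)
  have dp2: "\<And>j. j \<in> {1..n} \<Longrightarrow> has_pderiv (p j) 2 (- dH_dq (H2 n th1 th2 th3 ka rh t1 t2) j Q P QQ PP) (t1,t2)"
    using hamj[of 2] by (simp add: Ham_def)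
  have dqq2: "\<And>j. j \<in> {1..n} \<Longrightarrow> has_pderiv (qq j) 2 (dH_dpp (H2 n th1 th2 th3 ka rh t1 t2) j Q P QQ PP) (t1,t2)"
    using hamj[of 2] by (simp add: Ham_def)
  have sQQP: "(\<Sum>j=1..n. (QQ j - 1) * P j) = (\<Sum>j=1..n. QQ j * P j) - (\<Sum>j=1..n. P j)"
    by (simp add: algebra_simps sum_subtractf)
  have dw1: "has_pderiv w0 1 (W * (((\<Sum>j=1..n. P j) + th3) / (t1 - 1)
          + ((\<Sum>j=1..n. QQ j * P j) - (\<Sum>j=1..n. P j) + ka 0 + rh 1) / t1
          + (- (\<Sum>j=1..n. QQ j * P j) + th2) / (t1 - t2))) (t1, t2)"
    using w0_d1[OF z] unfolding qv sQQP .
  have dw2: "has_pderiv w0 2 (W * (- ((- (\<Sum>j=1..n. QQ j * P j) + th2) / (t1 - t2)))) (t1, t2)"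
    using w0_d2[OF z] unfolding qv .
  have wv: "w 0 (t1,t2) = W" "\<And>j. j \<in> {1..n} \<Longrightarrow> w j (t1,t2) = P j * W"
     "\<And>j. j \<in> {1..n} \<Longrightarrow> w (n+j) (t1,t2) = - QQ j * P j * W"
    by (auto simp: w_def qv)
  have wsum1: "\<And>A. A \<subseteq> {1..n} \<Longrightarrow> (\<Sum>j\<in>A. w j (t1,t2)) = (\<Sum>j\<in>A. P j) * W"
    by (auto simp: sum_distrib_right intro!: sum.cong wv(2))
  have wsum2: "\<And>A. A \<subseteq> {1..n} \<Longrightarrow> (\<Sum>j\<in>A. w (n+j) (t1,t2)) = - (\<Sum>j\<in>A. QQ j * P j) * W"
  proof -
    fix A :: "nat set" assume A: "A \<subseteq> {1..n}"
    have "(\<Sum>j\<in>A. w (n+j) (t1,t2)) = (\<Sum>j\<in>A. - (QQ j * P j) * W)"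
      by (rule sum.cong) (use A wv(3) in auto)
    then show "(\<Sum>j\<in>A. w (n+j) (t1,t2)) = - (\<Sum>j\<in>A. QQ j * P j) * W"
      by (simp add: sum_distrib_right sum_negf)
  qed
  have wf0: "w 0 = w0" by (rule ext) (simp add: w_def)
  have wfj: "\<And>j. j \<in> {1..n} \<Longrightarrow> w j = (\<lambda>z. p j z * w0 z)" by (rule ext) (simp add: w_def)
  have wfn: "\<And>j. j \<in> {1..n} \<Longrightarrow> w (n+j) = (\<lambda>z. - qq j z * p j z * w0 z)" by (rule ext) (simp add: w_def)
  have th1e: "th1 = - (\<Sum>i=1..n. ka i + rh i)" using constr3 by (simp add: algebra_simps eq_neg_iff_add_eq_0)
  consider "k = 0" | j where "j \<in> {1..n}" "k = j" | j where "j \<in> {1..n}" "k = n + j"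
  proof -
    assume a: "k = 0 \<Longrightarrow> thesis" and b: "\<And>j. j \<in> {1..n} \<Longrightarrow> k = j \<Longrightarrow> thesis"
       and c: "\<And>j. j \<in> {1..n} \<Longrightarrow> k = n + j \<Longrightarrow> thesis"
    show thesis
    proof (cases "k = 0")
      case True then show ?thesis by (rule a)
    next
      case False
      show ?thesis
      proof (cases "k \<le> n")
        case True with False show ?thesis by (intro b[of k]) auto
      next
        case False with k show ?thesis by (intro c[of "k - n"]) auto
      qed
    qed
  qed
  then show "has_pderiv (w k) 1
        (\<Sum>l=0..2*n. (A11 n th3 ka rh k l / (t1 - 1) + A01 n ka rh k l / t1
                      + At n th2 ka rh k l / (t1 - t2)) * w l (t1, t2)) (t1, t2)
    \<and> has_pderiv (w k) 2
        (\<Sum>l=0..2*n. (- At n th2 ka rh k l / (t1 - t2) + A12 n th2 th3 k l / (t2 - 1)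
                      + A02 n th2 ka rh k l / t2) * w l (t1, t2)) (t1, t2)"
  proof cases
    case 1
    have s1: "{1..n} \<subseteq> {1..n}" by auto
    have A: "has_pderiv (w k) 1
        (\<Sum>l=0..2*n. (A11 n th3 ka rh k l / (t1 - 1) + A01 n ka rh k l / t1
                      + At n th2 ka rh k l / (t1 - t2)) * w l (t1, t2)) (t1, t2)"
      unfolding 1 wf0 split3 R11_0 R01_0 Rt_0
      apply (rule has_pderiv_eq[OF dw1])
      apply (simp only: qv wv(1) wsum1[OF s1(1)] wsum2[OF s1(1)])
      apply (simp add: divide_inverse algebra_simps)
      done
    have B: "has_pderiv (w k) 2
        (\<Sum>l=0..2*n. (- At n th2 ka rh k l / (t1 - t2) + A12 n th2 th3 k l / (t2 - 1)
                      + A02 n th2 ka rh k l / t2) * w l (t1, t2)) (t1, t2)"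
      unfolding 1 wf0 split3 lin(4) R12_0 R02_0 Rt_0
      apply (rule has_pderiv_eq[OF dw2])
      apply (simp only: qv wv(1) wsum1[OF s1(1)] wsum2[OF s1(1)])
      apply (simp add: divide_inverse algebra_simps)
      done
    from A B show ?thesis ..
  next
    case (2 j)
    have s1: "{1..n} \<subseteq> {1..n}" "{j+1..n} \<subseteq> {1..n}" by auto
    have A: "has_pderiv (w k) 1
        (\<Sum>l=0..2*n. (A11 n th3 ka rh k l / (t1 - 1) + A01 n ka rh k l / t1
                      + At n th2 ka rh k l / (t1 - t2)) * w l (t1, t2)) (t1, t2)"
      unfolding 2 wfj[OF 2(1)] split3 R11_i[OF 2(1)] R01_i[OF 2(1)] Rt_i[OF 2(1)]
      apply (rule has_pderiv_eq[OF has_pderiv_mult[OF dp1[OF 2(1)] dw1]])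
      apply (simp only: dH1_q[OF 2(1)] SF SJ[OF 2(1)])
      apply (simp only: qv wv(1) wv(2)[OF 2(1)] wsum1[OF s1(1)] wsum1[OF s1(2)] PP0[OF 2(1)] th1e
           sum_split_at[OF 2(1), of "\<lambda>i. ka i + rh i"])
      apply (simp only: kaj[OF 2(1)])?
      apply (simp add: divide_inverse algebra_simps)
      done
    have B: "has_pderiv (w k) 2
        (\<Sum>l=0..2*n. (- At n th2 ka rh k l / (t1 - t2) + A12 n th2 th3 k l / (t2 - 1)
                      + A02 n th2 ka rh k l / t2) * w l (t1, t2)) (t1, t2)"
      unfolding 2 wfj[OF 2(1)] split3 lin(4) R12_i[OF 2(1)] R02_i[OF 2(1)] Rt_i[OF 2(1)]
      apply (rule has_pderiv_eq[OF has_pderiv_mult[OF dp2[OF 2(1)] dw2]])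
      apply (simp only: dH2_q[OF 2(1)] SF SJ[OF 2(1)])
      apply (simp only: qv wv(1) wv(2)[OF 2(1)] wv(3)[OF 2(1)] PP0[OF 2(1)] th1e swapdiv
           sum_split_at[OF 2(1), of "\<lambda>i. ka i + rh i"])
      apply (simp only: kaj[OF 2(1)])?
      apply (simp add: divide_inverse algebra_simps)
      done
    from A B show ?thesis ..
  next
    case (3 j)
    have s1: "{1..n} \<subseteq> {1..n}" "{j+1..n} \<subseteq> {1..n}" "{1..j-1} \<subseteq> {1..n}" using 3(1) by auto
    have A: "has_pderiv (w k) 1
        (\<Sum>l=0..2*n. (A11 n th3 ka rh k l / (t1 - 1) + A01 n ka rh k l / t1
                      + At n th2 ka rh k l / (t1 - t2)) * w l (t1, t2)) (t1, t2)"
      unfolding 3(2) wfn[OF 3(1)] split3 R11_ni[OF 3(1)] R01_ni[OF 3(1)] Rt_ni[OF 3(1)]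
      apply (rule has_pderiv_eq[OF has_pderiv_mult[OF has_pderiv_mult[OF has_pderiv_uminus[OF dqq1[OF 3(1)]] dp1[OF 3(1)]] dw1]])
      apply (simp only: dH1_q[OF 3(1)] dH1_pp[OF 3(1)] SF SJ[OF 3(1)])
      apply (simp only: qv wv(1) wv(3)[OF 3(1)] wsum2[OF s1(1)] wsum2[OF s1(2)] PP0[OF 3(1)] th1e
           sum_split_at[OF 3(1), of "\<lambda>i. ka i + rh i"])
      apply (simp only: kaj[OF 3(1)])?
      apply (simp add: divide_inverse algebra_simps)
      done
    have B: "has_pderiv (w k) 2
        (\<Sum>l=0..2*n. (- At n th2 ka rh k l / (t1 - t2) + A12 n th2 th3 k l / (t2 - 1)
                      + A02 n th2 ka rh k l / t2) * w l (t1, t2)) (t1, t2)"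
      unfolding 3(2) wfn[OF 3(1)] split3 lin(4) R12_ni[OF 3(1)] R02_ni[OF 3(1)] Rt_ni[OF 3(1)]
      apply (rule has_pderiv_eq[OF has_pderiv_mult[OF has_pderiv_mult[OF has_pderiv_uminus[OF dqq2[OF 3(1)]] dp2[OF 3(1)]] dw2]])
      apply (simp only: dH2_q[OF 3(1)] dH2_pp[OF 3(1)] SF SJ[OF 3(1)])
      apply (simp only: qv wv(1) wv(2)[OF 3(1)] wv(3)[OF 3(1)] wsum2[OF s1(1)] wsum2[OF s1(3)] PP0[OF 3(1)] th1e swapdiv
           sum_split_at[OF 3(1), of "\<lambda>i. ka i + rh i"])
      apply (simp only: kaj[OF 3(1)])?
      apply (simp add: divide_inverse algebra_simps)
      done
    from A B show ?thesis ..
  qed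
qed

end
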